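(* Let $(\lambda_n)_{n\ge1}$ be positive reals and $(\nu_n)_{n\ge1}$ with $0<\nu_n\leq1$. Consider the system (governing the state probabilities of the state dependent fractional pure birth process) $$\partial_t^{\nu_n} p^{\nu_n}(n,t)=-\lambda_np^{\nu_n}(n,t)+\lambda_{n-1}p^{\nu_{n-1}}(n-1,t),\qquad n\geq 1,\ t\ge0,$$ with $p^{\nu_0}(0,t)=0$ for $t\ge0$, $p^{\nu_1}(1,0)=1$ and $p^{\nu_n}(n,0)=0$ for $n\geq 2$. The solution of this system is given by $$p^{\nu_n}(n,t)=(-1)^{n-1}\frac{\lambda_1}{\lambda_n}\sum_{k=n-1}^{\infty}(-1)^k\sum_{\Lambda^k_n}\frac{t^{\sum_{j=1}^nk_j\nu_j}\prod_{j=1}^n\lambda_j^{k_j}}{\Gamma\big(1+\sum_{j=1}^nk_j\nu_j\big)},\qquad n\geq1,$$ where $\Lambda^k_n=\{(k_1,k_2,\ldots,k_n):\ \sum_{j=1}^nk_j=k,\ k_1\in\mathbb{N}_0,\ k_j\in\mathbb{N}_0\setminus\{0\} \text{ for } 2\leq j\leq n\}$.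
   Context: $\mathbb{N}_0$ denotes the set of nonnegative integers. For $0<\nu<1$, $\partial_t^{\nu}f(t)=\frac{1}{\Gamma(1-\nu)}\int_0^t (t-s)^{-\nu}f'(s)\,\mathrm{d}s$ is the Caputo derivative, and $\partial_t^{1}f=f'$. *)

theory Defs
  imports "HOL-Analysis.Analysis"
begin

text \<open>Power t^e with the convention t^0 = 1 (also at t = 0); for e > 0, 0^e = 0.\<close>
definition tpow :: "real \<Rightarrow> real \<Rightarrow> real" where
  "tpow t e = (if e = 0 then 1 else t powr e)"

text \<open>Caputo derivative of order nu in (0,1], value D at time t > 0.
  For 0 < nu < 1: D = 1/Gamma(1-nu) * integral_0^t (t-s)^(-nu) f'(s) ds;
  for nu = 1: D = f'(t).\<close>
definition has_caputo_derivative :: "real \<Rightarrow> (real \<Rightarrow> real) \<Rightarrow> real \<Rightarrow> real \<Rightarrow> bool" where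
  "has_caputo_derivative nu f D t \<longleftrightarrow>
     (if nu = 1 then (f has_real_derivative D) (at t)
      else (\<forall>s\<in>{0<..<t}. f differentiable (at s)) \<and>
           ((\<lambda>s. (t - s) powr (- nu) * deriv f s) has_integral (Gamma (1 - nu) * D)) {0..t})"

text \<open>The index set Lambda^k_n: tuples (k_1,...,k_n), encoded as functions nat => nat
  supported in {1..n}, with sum k, k_j >= 1 for 2 <= j <= n.\<close>
definition Lambda_set :: "nat \<Rightarrow> nat \<Rightarrow> (nat \<Rightarrow> nat) set" where
  "Lambda_set n k = {\<kappa>. (\<forall>j. j \<notin> {1..n} \<longrightarrow> \<kappa> j = 0) \<and> (\<forall>j\<in>{2..n}. 1 \<le> \<kappa> j)
                        \<and> (\<Sum>j=1..n. \<kappa> j) = k}"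

definition fpb_inner :: "(nat \<Rightarrow> real) \<Rightarrow> (nat \<Rightarrow> real) \<Rightarrow> nat \<Rightarrow> nat \<Rightarrow> real \<Rightarrow> real" where
  "fpb_inner lam nu n k t =
     (\<Sum>\<kappa>\<in>Lambda_set n k.
        tpow t (\<Sum>j=1..n. real (\<kappa> j) * nu j) * (\<Prod>j=1..n. lam j ^ \<kappa> j)
        / Gamma (1 + (\<Sum>j=1..n. real (\<kappa> j) * nu j)))"

text \<open>m-th term of the series, corresponding to k = m + (n - 1).\<close>
definition fpb_term :: "(nat \<Rightarrow> real) \<Rightarrow> (nat \<Rightarrow> real) \<Rightarrow> nat \<Rightarrow> real \<Rightarrow> nat \<Rightarrow> real" where
  "fpb_term lam nu n t m = (-1) ^ (m + (n - 1)) * fpb_inner lam nu n (m + (n - 1)) t"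

definition fpb_sol :: "(nat \<Rightarrow> real) \<Rightarrow> (nat \<Rightarrow> real) \<Rightarrow> nat \<Rightarrow> real \<Rightarrow> real" where
  "fpb_sol lam nu n t =
     (if n = 0 then 0
      else (-1) ^ (n - 1) * (lam 1 / lam n) * (\<Sum>m. fpb_term lam nu n t m))"

end

theory Submission
  imports Defs
begin


lemma beta_integral_scaled:
  fixes t nu e :: real
  assumes t: "t > 0" and nu: "0 < nu" "nu < 1" and e: "e > 0"
  shows "((\<lambda>s. (t - s) powr (- nu) * s powr (e - 1)) has_integral
          t powr (e - nu) * Beta e (1 - nu)) {0..t}"
proof -
  have B: "((\<lambda>u. u powr (e - 1) * (1 - u) powr ((1 - nu) - 1)) has_integral Beta e (1 - nu)) (cbox 0 1)"
    using has_integral_Beta_real[of e "1 - nu"] e nu by simp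
  have "((\<lambda>x. (\<lambda>u. u powr (e - 1) * (1 - u) powr ((1 - nu) - 1)) ((1/t) *\<^sub>R x + 0)) has_integral
        (1 / \<bar>1/t\<bar> ^ DIM(real)) *\<^sub>R Beta e (1 - nu))
        ((\<lambda>x. (1 / (1/t)) *\<^sub>R x + - ((1 / (1/t)) *\<^sub>R 0)) ` cbox 0 1)"
    by (rule has_integral_affinity[OF B]) (use t in auto)
  moreover have "((\<lambda>x. (1 / (1/t)) *\<^sub>R x + - ((1 / (1/t)) *\<^sub>R 0)) ` cbox 0 1) = {0..t}"
    using t by (auto simp: image_def intro!: bexI[where x="_ / t"])
  ultimately have I: "((\<lambda>s. (s/t) powr (e - 1) * (1 - s/t) powr (- nu)) has_integral t * Beta e (1 - nu)) {0..t}"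
    using t by simp
  have I2: "((\<lambda>s. t powr (e - nu - 1) * ((s/t) powr (e - 1) * (1 - s/t) powr (- nu))) has_integral
     t powr (e - nu - 1) * (t * Beta e (1 - nu))) {0..t}"
    by (rule has_integral_mult_right[OF I])
  have eq: "t powr (e - nu - 1) * ((s/t) powr (e - 1) * (1 - s/t) powr (- nu)) = (t - s) powr (- nu) * s powr (e - 1)"
    if "s \<in> {0<..<t}" for s
  proof -
    from that have s: "0 < s" "s < t" by auto
    have "1 - s/t = (t - s) / t" using t by (simp add: field_simps)
    hence "(1 - s/t) powr (- nu) = (t - s) powr (-nu) / t powr (-nu)"
      using s t by (simp add: powr_divide)
    moreover have "(s/t) powr (e - 1) = s powr (e - 1) / t powr (e - 1)"
      using s t by (simp add: powr_divide)
    moreover have "t powr (1 + nu) = t * t powr nu" using t by (simp add: powr_add)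
    ultimately show ?thesis using t s
      by (simp add: powr_diff powr_minus field_simps powr_add[symmetric])
  qed
  have "t powr (e - nu - 1) * (t * Beta e (1 - nu)) = t powr (e - nu) * Beta e (1 - nu)"
    using t by (simp add: powr_diff field_simps powr_add)
  with I2 have "((\<lambda>s. t powr (e - nu - 1) * ((s/t) powr (e - 1) * (1 - s/t) powr (- nu))) has_integral
     t powr (e - nu) * Beta e (1 - nu)) {0<..<t}"
    by (simp add: has_integral_Icc_iff_Ioo)
  hence "((\<lambda>s. (t - s) powr (- nu) * s powr (e - 1)) has_integral t powr (e - nu) * Beta e (1 - nu)) {0<..<t}"
    by (rule has_integral_spike_finite[of "{}", rotated 2]) (use eq in auto)
  thus ?thesis by (simp add: has_integral_Icc_iff_Ioo)
qed

definition pw :: "real \<Rightarrow> real \<Rightarrow> real" where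
  "pw e t = tpow t e / Gamma (1 + e)"

definition dpw :: "real \<Rightarrow> real \<Rightarrow> real" where
  "dpw e s = e * s powr (e - 1) / Gamma (1 + e)"

definition dv :: "real \<Rightarrow> real \<Rightarrow> real \<Rightarrow> real" where
  "dv nu e t = (if e = 0 then 0 else t powr (e - nu) / Gamma (1 + e - nu))"

definition bt :: "real \<Rightarrow> real \<Rightarrow> real" where
  "bt T x = T powr x / Gamma (1 + x)"

lemma Gamma_1pe_pos: "e \<ge> 0 \<Longrightarrow> Gamma (1 + e) > (0::real)"
  by (rule Gamma_real_pos) simp

lemma Gamma_1pe_nz: "e \<ge> 0 \<Longrightarrow> Gamma (1 + e) \<noteq> (0::real)"
proof
  assume "e \<ge> 0" "Gamma (1 + e) = 0"
  with Gamma_1pe_pos[of e] show False by linarith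
qed

lemma Gamma_1pe: "e > 0 \<Longrightarrow> Gamma (1 + e) = e * Gamma (e::real)"
  proof -
  assume "e > 0"
  hence "e \<notin> \<int>\<^sub>\<le>\<^sub>0" using nonpos_Ints_nonpos[of e] by auto
  from Gamma_plus1[OF this] show ?thesis by (simp add: add.commute)
qed

lemma pw_deriv:
  assumes "s > 0" "e \<ge> 0"
  shows "(pw e has_real_derivative dpw e s) (at s)"
proof (cases "e = 0")
  case True
  then have "pw e = (\<lambda>t. 1)" by (auto simp: pw_def tpow_def)
  then show ?thesis using True by (simp add: dpw_def)
next
  case False
  then have "pw e = (\<lambda>t. t powr e / Gamma (1 + e))" by (auto simp: pw_def tpow_def)
  moreover have "((\<lambda>t. t powr e / Gamma (1 + e)) has_real_derivative e * s powr (e - 1) / Gamma (1 + e)) (at s)"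
    using assms Gamma_1pe_nz[OF assms(2)] by (auto intro!: derivative_eq_intros)
  ultimately show ?thesis by (simp add: dpw_def)
qed

lemma pw_continuous: "e \<ge> 0 \<Longrightarrow> continuous_on {0..} (pw e)"
proof (cases "e = 0")
  case True
  then show ?thesis by (simp add: pw_def tpow_def)
next
  case False
  assume "e \<ge> 0"
  with False have "pw e = (\<lambda>t. t powr e / Gamma (1 + e))" by (auto simp: pw_def tpow_def)
  moreover have "continuous_on {0..} (\<lambda>t::real. t powr e)"
    by (rule continuous_on_powr'[OF continuous_on_id continuous_on_const]) (use False \<open>e \<ge> 0\<close> in auto)
  then have "continuous_on {0..} (\<lambda>t::real. t powr e / Gamma (1 + e))"
    by (rule continuous_on_divide[OF _ continuous_on_const]) (use Gamma_1pe_nz[OF \<open>e \<ge> 0\<close>] in blast)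
  ultimately show ?thesis by simp
qed

lemma pw_bound:
  assumes "0 \<le> t" "t \<le> T" "e \<ge> 0" "T > 0"
  shows "\<bar>pw e t\<bar> \<le> bt T e"
proof -
  have g: "Gamma (1 + e) > 0" using assms by (simp add: Gamma_1pe_pos)
  have "\<bar>tpow t e\<bar> \<le> T powr e"
  proof (cases "e = 0")
    case True then show ?thesis using assms by (simp add: tpow_def)
  next
    case False then show ?thesis using assms by (simp add: tpow_def powr_mono2)
  qed
  hence "\<bar>tpow t e\<bar> / Gamma (1 + e) \<le> T powr e / Gamma (1 + e)"
    using g by (intro divide_right_mono) auto
  thus ?thesis using g by (simp add: pw_def bt_def)
qed

lemma bt_nonneg: "x \<ge> 0 \<Longrightarrow> bt T x \<ge> 0"
  unfolding bt_def using Gamma_1pe_pos[of x] by simp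

lemma dpw_eq_dv1: "s > 0 \<Longrightarrow> e \<ge> 0 \<Longrightarrow> dpw e s = dv 1 e s"
proof (cases "e = 0")
  case False
  assume "s > 0" "e \<ge> 0"
  then have "Gamma (1 + e) = e * Gamma e" using Gamma_1pe[of e] False by simp
  then show ?thesis using False \<open>e \<ge> 0\<close> by (simp add: dpw_def dv_def)
qed (simp add: dpw_def dv_def)

lemma caputo_pw:
  assumes t: "t > 0" and nu: "0 < nu" "nu < 1" and e: "e \<ge> 0"
  shows "((\<lambda>s. (t - s) powr (- nu) * dpw e s) has_integral Gamma (1 - nu) * dv nu e t) {0..t}"
proof (cases "e = 0")
  case True
  then show ?thesis by (simp add: dpw_def dv_def)
next
  case False
  with e have e: "e > 0" by simp
  have I: "((\<lambda>s. (e / Gamma (1 + e)) * ((t - s) powr (- nu) * s powr (e - 1))) has_integral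
          (e / Gamma (1 + e)) * (t powr (e - nu) * Beta e (1 - nu))) {0..t}"
    by (rule has_integral_mult_right[OF beta_integral_scaled[OF t nu e]])
  have G: "Gamma (1 + e) = e * Gamma e" using Gamma_1pe[OF e] .
  have Ge: "Gamma e \<noteq> 0" using Gamma_real_pos[OF e] by linarith
  have "(e / Gamma (1 + e)) * (t powr (e - nu) * Beta e (1 - nu)) = Gamma (1 - nu) * dv nu e t"
    using e Ge by (simp add: G Beta_def dv_def add_diff_eq add.commute less_imp_neq[symmetric])
  moreover have "(\<lambda>s. (e / Gamma (1 + e)) * ((t - s) powr (- nu) * s powr (e - 1))) = (\<lambda>s. (t - s) powr (- nu) * dpw e s)"
    by (auto simp: dpw_def)
  ultimately show ?thesis using I by simp
qed


context
  fixes A :: "nat \<Rightarrow> 'a set" and c e :: "'a \<Rightarrow> real"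
  assumes finA: "\<And>m. finite (A m)"
    and e_nn: "\<And>m i. i \<in> A m \<Longrightarrow> 0 \<le> e i"
    and summ: "\<And>T. T > 0 \<Longrightarrow> summable (\<lambda>m. \<Sum>i\<in>A m. \<bar>c i\<bar> * bt T (e i))"
begin

lemma BB_nonneg: "0 \<le> (\<Sum>i\<in>A m. \<bar>c i\<bar> * bt T (e i))"
  by (intro sum_nonneg mult_nonneg_nonneg bt_nonneg e_nn) auto

lemma GG_bound:
  assumes "0 \<le> t" "t \<le> T" "T > 0"
  shows "\<bar>\<Sum>i\<in>A m. c i * pw (e i) t\<bar> \<le> (\<Sum>i\<in>A m. \<bar>c i\<bar> * bt T (e i))"
proof -
  have "\<bar>\<Sum>i\<in>A m. c i * pw (e i) t\<bar> \<le> (\<Sum>i\<in>A m. \<bar>c i * pw (e i) t\<bar>)" by (rule sum_abs)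
  also have "\<dots> \<le> (\<Sum>i\<in>A m. \<bar>c i\<bar> * bt T (e i))"
  proof (intro sum_mono)
    fix i assume i: "i \<in> A m"
    have "\<bar>pw (e i) t\<bar> \<le> bt T (e i)" by (rule pw_bound) (use assms e_nn[OF i] in auto)
    thus "\<bar>c i * pw (e i) t\<bar> \<le> \<bar>c i\<bar> * bt T (e i)"
      by (simp add: abs_mult mult_left_mono)
  qed
  finally show ?thesis .
qed

lemma summable_GG: "t \<ge> 0 \<Longrightarrow> summable (\<lambda>m. \<Sum>i\<in>A m. c i * pw (e i) t)"
  by (rule summable_comparison_test[OF _ summ[of "t + 1"]]) (auto intro!: GG_bound)

lemma summable_abs_GG: "t \<ge> 0 \<Longrightarrow> summable (\<lambda>m. \<bar>\<Sum>i\<in>A m. c i * pw (e i) t\<bar>)"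
  by (rule summable_comparison_test[OF _ summ[of "t + 1"]]) (auto intro!: GG_bound)

lemma cont_FF_Icc:
  assumes "T > 0"
  shows "continuous_on {0..T} (\<lambda>t. \<Sum>m. \<Sum>i\<in>A m. c i * pw (e i) t)"
proof -
  have U: "uniform_limit {0..T} (\<lambda>n t. \<Sum>m<n. \<Sum>i\<in>A m. c i * pw (e i) t)
     (\<lambda>t. \<Sum>m. \<Sum>i\<in>A m. c i * pw (e i) t) sequentially"
    by (rule Weierstrass_m_test[OF _ summ[OF assms]]) (use assms in \<open>auto intro!: GG_bound\<close>)
  have "continuous_on {0..T} (\<lambda>t. \<Sum>m<n. \<Sum>i\<in>A m. c i * pw (e i) t)" for n
  proof (intro continuous_on_sum ballI)
    fix m i assume "i \<in> A m"
    have "continuous_on {0..} (pw (e i))" by (rule pw_continuous[OF e_nn[OF \<open>i \<in> A m\<close>]])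
    hence "continuous_on {0..T} (pw (e i))" by (rule continuous_on_subset) auto
    thus "continuous_on {0..T} (\<lambda>t. c i * pw (e i) t)" by (intro continuous_on_mult continuous_on_const)
  qed
  then show ?thesis
    by (intro uniform_limit_theorem[OF _ U]) auto
qed

lemma cont_FF: "continuous_on {0..} (\<lambda>t. \<Sum>m. \<Sum>i\<in>A m. c i * pw (e i) t)"
proof (subst continuous_on_eq_continuous_within, intro ballI)
  fix x :: real assume x: "x \<in> {0..}"
  have "continuous_on {0..x+1} (\<lambda>t. \<Sum>m. \<Sum>i\<in>A m. c i * pw (e i) t)"
    by (rule cont_FF_Icc) (use x in auto)
  hence "continuous (at x within {0..x+1}) (\<lambda>t. \<Sum>m. \<Sum>i\<in>A m. c i * pw (e i) t)"
    using x by (simp add: continuous_on_eq_continuous_within)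
  moreover have "at x within {0..x+1} = at x within {0..}"
    by (rule at_within_nhd[of _ "{..<x+1}"]) auto
  ultimately show "continuous (at x within {0..}) (\<lambda>t. \<Sum>m. \<Sum>i\<in>A m. c i * pw (e i) t)"
    by simp
qed

lemma dpw_bound:
  assumes "0 < a" "a \<le> s" "s \<le> b" "ee \<ge> 0"
  shows "\<bar>dpw ee s\<bar> \<le> bt (exp 1 * b) ee / a"
proof -
  have g: "Gamma (1 + ee) > 0" using assms by (simp add: Gamma_1pe_pos)
  have s: "s > 0" using assms by simp
  have "ee * s powr (ee - 1) = ee * (s powr ee / s)" using s by (simp add: powr_diff)
  also have "\<dots> \<le> exp ee * (b powr ee / a)"
  proof (rule mult_mono)
    show "ee \<le> exp ee" using exp_ge_add_one_self[of ee] by linarith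
    show "s powr ee / s \<le> b powr ee / a"
      by (rule frac_le) (use assms s in \<open>auto intro: powr_mono2\<close>)
  qed (use assms in auto)
  also have "\<dots> = (exp 1 * b) powr ee / a"
    using assms by (simp add: powr_mult exp_powr_real)
  finally have "ee * s powr (ee - 1) \<le> (exp 1 * b) powr ee / a" .
  moreover have "\<bar>dpw ee s\<bar> = ee * s powr (ee - 1) / Gamma (1 + ee)"
    using g assms by (simp add: dpw_def abs_mult)
  ultimately have "\<bar>dpw ee s\<bar> \<le> ((exp 1 * b) powr ee / a) / Gamma (1 + ee)"
    using g by (metis divide_right_mono less_imp_le)
  thus ?thesis unfolding bt_def by (simp add: mult.commute)
qed

lemma DG_bound:
  assumes "0 < a" "a \<le> s" "s \<le> b"
  shows "\<bar>\<Sum>i\<in>A m. c i * dpw (e i) s\<bar> \<le> (\<Sum>i\<in>A m. \<bar>c i\<bar> * bt (exp 1 * b) (e i)) / a"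
proof -
  have "\<bar>\<Sum>i\<in>A m. c i * dpw (e i) s\<bar> \<le> (\<Sum>i\<in>A m. \<bar>c i * dpw (e i) s\<bar>)" by (rule sum_abs)
  also have "\<dots> \<le> (\<Sum>i\<in>A m. \<bar>c i\<bar> * bt (exp 1 * b) (e i) / a)"
  proof (intro sum_mono)
    fix i assume i: "i \<in> A m"
    have "\<bar>dpw (e i) s\<bar> \<le> bt (exp 1 * b) (e i) / a" by (rule dpw_bound) (use assms e_nn[OF i] in auto)
    from mult_left_mono[OF this abs_ge_zero[of "c i"]]
    show "\<bar>c i * dpw (e i) s\<bar> \<le> \<bar>c i\<bar> * bt (exp 1 * b) (e i) / a"
      by (simp add: abs_mult)
  qed
  also have "\<dots> = (\<Sum>i\<in>A m. \<bar>c i\<bar> * bt (exp 1 * b) (e i)) / a"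
    by (simp add: sum_divide_distrib)
  finally show ?thesis .
qed

lemma GG_deriv:
  assumes "y > 0"
  shows "((\<lambda>t. \<Sum>i\<in>A m. c i * pw (e i) t) has_real_derivative (\<Sum>i\<in>A m. c i * dpw (e i) y)) (at y)"
proof (rule DERIV_sum)
  fix i assume i: "i \<in> A m"
  show "((\<lambda>t. c i * pw (e i) t) has_real_derivative c i * dpw (e i) y) (at y)"
    by (rule DERIV_cmult[OF pw_deriv[OF assms e_nn[OF i]]])
qed

lemma FF_deriv:
  assumes x: "x > 0"
  shows "summable (\<lambda>m. \<Sum>i\<in>A m. c i * dpw (e i) x)"
    and "((\<lambda>t. \<Sum>m. \<Sum>i\<in>A m. c i * pw (e i) t) has_real_derivative
           (\<Sum>m. \<Sum>i\<in>A m. c i * dpw (e i) x)) (at x)"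
proof -
  define S where "S = {x/2<..<x+1}"
  define M where "M = (\<lambda>m. (\<Sum>i\<in>A m. \<bar>c i\<bar> * bt (exp 1 * (x + 1)) (e i)) / (x / 2))"
  have sM: "summable M" unfolding M_def
    by (rule summable_divide[OF summ]) (use x in \<open>auto intro: mult_pos_pos\<close>)
  have bnd: "\<bar>\<Sum>i\<in>A m. c i * dpw (e i) y\<bar> \<le> M m" if "y \<in> S" for m y
    unfolding M_def by (rule DG_bound) (use that x in \<open>auto simp: S_def\<close>)
  have U: "uniform_limit S (\<lambda>n y. \<Sum>m<n. \<Sum>i\<in>A m. c i * dpw (e i) y)
      (\<lambda>y. \<Sum>m. \<Sum>i\<in>A m. c i * dpw (e i) y) sequentially"
    by (rule Weierstrass_m_test[OF _ sM]) (use bnd in auto)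
  have xS: "x \<in> S" using x by (auto simp: S_def)
  show "summable (\<lambda>m. \<Sum>i\<in>A m. c i * dpw (e i) x)"
    by (rule summable_comparison_test[OF _ sM]) (use bnd xS in auto)
  have D: "((\<lambda>t. \<Sum>i\<in>A n. c i * pw (e i) t) has_field_derivative (\<Sum>i\<in>A n. c i * dpw (e i) y)) (at y within S)"
    if "y \<in> S" for n y
    by (rule has_field_derivative_at_within[OF GG_deriv]) (use that x in \<open>auto simp: S_def\<close>)
  obtain g where g: "\<forall>y\<in>S. (\<lambda>n. \<Sum>i\<in>A n. c i * pw (e i) y) sums g y \<and>
      (g has_field_derivative (\<Sum>m. \<Sum>i\<in>A m. c i * dpw (e i) y)) (at y within S)"
    using has_field_derivative_series[OF _ D U xS summable_GG[of x]] x
    by (auto simp: S_def)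
  have oS: "open S" by (simp add: S_def)
  have "(g has_field_derivative (\<Sum>m. \<Sum>i\<in>A m. c i * dpw (e i) x)) (at x within S)"
    using g xS by blast
  then have gd: "(g has_field_derivative (\<Sum>m. \<Sum>i\<in>A m. c i * dpw (e i) x)) (at x)"
    using at_within_open[OF xS oS] by simp
  have geq: "g y = (\<Sum>m. \<Sum>i\<in>A m. c i * pw (e i) y)" if "y \<in> S" for y
  proof -
    from g that have "(\<lambda>n. \<Sum>i\<in>A n. c i * pw (e i) y) sums g y" by blast
    thus ?thesis by (rule sums_unique)
  qed
  show "((\<lambda>t. \<Sum>m. \<Sum>i\<in>A m. c i * pw (e i) t) has_real_derivative
           (\<Sum>m. \<Sum>i\<in>A m. c i * dpw (e i) x)) (at x)"
    by (rule has_field_derivative_transform_within_open[OF gd oS xS]) (rule geq)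
qed

lemma dpw_dom:
  assumes s: "0 < s" "s \<le> t" and ez: "ez > 0" and ee: "ee = 0 \<or> ez \<le> ee" "ee \<ge> 0"
  shows "\<bar>dpw ee s\<bar> \<le> s powr (ez - 1) * bt (exp 1 * max 1 t) ee"
proof (cases "ee = 0")
  case True
  then show ?thesis by (simp add: dpw_def bt_nonneg)
next
  case False
  with ee have le: "ez \<le> ee" "ee > 0" by auto
  define M where "M = max 1 t"
  have M: "M \<ge> 1" "s \<le> M" using s by (auto simp: M_def)
  have g: "Gamma (1 + ee) > 0" using le by (simp add: Gamma_1pe_pos)
  have "s powr (ee - 1) = s powr (ez - 1) * s powr (ee - ez)"
    using s by (simp add: powr_add[symmetric])
  also have "\<dots> \<le> s powr (ez - 1) * M powr ee"
  proof (rule mult_left_mono)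
    have "s powr (ee - ez) \<le> M powr (ee - ez)" using le s M by (intro powr_mono2) auto
    also have "\<dots> \<le> M powr ee" using le M ez by (intro powr_mono) auto
    finally show "s powr (ee - ez) \<le> M powr ee" .
  qed simp
  finally have A: "s powr (ee - 1) \<le> s powr (ez - 1) * M powr ee" .
  have "ee * s powr (ee - 1) \<le> exp ee * (s powr (ez - 1) * M powr ee)"
  proof (rule mult_mono[OF _ A])
    show "ee \<le> exp ee" using exp_ge_add_one_self[of ee] by linarith
  qed (use le in auto)
  also have "\<dots> = s powr (ez - 1) * (exp 1 * M) powr ee"
    using M by (simp add: powr_mult exp_powr_real)
  finally have B: "ee * s powr (ee - 1) \<le> s powr (ez - 1) * (exp 1 * M) powr ee" .
  have "\<bar>dpw ee s\<bar> = ee * s powr (ee - 1) / Gamma (1 + ee)"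
    using g le by (simp add: dpw_def abs_mult)
  also have "\<dots> \<le> s powr (ez - 1) * (exp 1 * M) powr ee / Gamma (1 + ee)"
    using B g by (metis divide_right_mono less_imp_le)
  finally show ?thesis by (simp add: bt_def M_def)
qed

lemma FF_caputo:
  assumes nu: "0 < nu" "nu \<le> 1" and ez: "ez > 0"
    and ezle: "\<And>m i. i \<in> A m \<Longrightarrow> e i = 0 \<or> ez \<le> e i" and t: "t > 0"
  shows "\<exists>D. (\<lambda>m. \<Sum>i\<in>A m. c i * dv nu (e i) t) sums D \<and>
     has_caputo_derivative nu (\<lambda>t. \<Sum>m. \<Sum>i\<in>A m. c i * pw (e i) t) D t"
proof (cases "nu = 1")
  case True
  have eq: "(\<lambda>m. \<Sum>i\<in>A m. c i * dv nu (e i) t) = (\<lambda>m. \<Sum>i\<in>A m. c i * dpw (e i) t)"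
    using True t e_nn by (auto intro!: sum.cong simp: dpw_eq_dv1)
  show ?thesis
    using FF_deriv[OF t] True unfolding eq has_caputo_derivative_def
    by (auto intro!: exI[where x="\<Sum>m. \<Sum>i\<in>A m. c i * dpw (e i) t"] summable_sums)
next
  case False
  with nu have nu1: "nu < 1" by simp
  define F where "F = (\<lambda>t. \<Sum>m. \<Sum>i\<in>A m. c i * pw (e i) t)"
  define S where "S = {0<..<t}"
  define P where "P = (\<lambda>N. \<Sum>m<N. \<Sum>i\<in>A m. c i * dv nu (e i) t)"
  define f where "f = (\<lambda>N s. (t - s) powr (- nu) * (\<Sum>m<N. \<Sum>i\<in>A m. c i * dpw (e i) s))"
  define K where "K = (\<Sum>m. \<Sum>i\<in>A m. \<bar>c i\<bar> * bt (exp 1 * max 1 t) (e i))"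
  define h where "h = (\<lambda>s. K * ((t - s) powr (- nu) * s powr (ez - 1)))"
  define g where "g = (\<lambda>s. (t - s) powr (- nu) * deriv F s)"
  have sK: "summable (\<lambda>m. \<Sum>i\<in>A m. \<bar>c i\<bar> * bt (exp 1 * max 1 t) (e i))"
    by (rule summ) (auto intro: mult_pos_pos)
  have dF: "(F has_real_derivative (\<Sum>m. \<Sum>i\<in>A m. c i * dpw (e i) s)) (at s)" if "s > 0" for s
    unfolding F_def by (rule FF_deriv(2)[OF that])
  have diff: "\<forall>s\<in>{0<..<t}. F differentiable (at s)"
  proof
    fix s assume "s \<in> {0<..<t}"
    hence "s > 0" by simp
    from dF[OF this] have "(F has_derivative (*) (\<Sum>m. \<Sum>i\<in>A m. c i * dpw (e i) s)) (at s)"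
      by (simp add: has_field_derivative_def)
    thus "F differentiable (at s)" unfolding differentiable_def by blast
  qed
  have fint: "(f N has_integral Gamma (1 - nu) * P N) S" for N
  proof -
    have "((\<lambda>s. \<Sum>m<N. \<Sum>i\<in>A m. c i * ((t - s) powr (- nu) * dpw (e i) s)) has_integral
          (\<Sum>m<N. \<Sum>i\<in>A m. c i * (Gamma (1 - nu) * dv nu (e i) t))) {0..t}"
      by (intro has_integral_sum finite_lessThan finA has_integral_mult_right caputo_pw t nu1 nu(1) e_nn)
    moreover have "(\<lambda>s. \<Sum>m<N. \<Sum>i\<in>A m. c i * ((t - s) powr (- nu) * dpw (e i) s)) = f N"
      by (auto simp: f_def sum_distrib_left mult_ac intro!: ext sum.cong)
    moreover have "(\<Sum>m<N. \<Sum>i\<in>A m. c i * (Gamma (1 - nu) * dv nu (e i) t)) = Gamma (1 - nu) * P N"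
      by (auto simp: P_def sum_distrib_left mult_ac intro!: sum.cong)
    ultimately show ?thesis by (simp add: S_def has_integral_Icc_iff_Ioo)
  qed
  have hint: "h integrable_on S"
  proof -
    have "((\<lambda>s. (t - s) powr (- nu) * s powr (ez - 1)) has_integral t powr (ez - nu) * Beta ez (1 - nu)) {0..t}"
      by (rule beta_integral_scaled[OF t nu(1) nu1 ez])
    hence "((\<lambda>s. (t - s) powr (- nu) * s powr (ez - 1)) has_integral t powr (ez - nu) * Beta ez (1 - nu)) S"
      by (simp add: S_def has_integral_Icc_iff_Ioo)
    from has_integral_mult_right[OF this, of K] show ?thesis unfolding h_def
      by (rule has_integral_integrable)
  qed
  have bnd: "norm (f N s) \<le> h s" if s: "s \<in> S" for N s
  proof -
    from s have s0: "0 < s" "s \<le> t" by (auto simp: S_def)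
    have "\<bar>\<Sum>m<N. \<Sum>i\<in>A m. c i * dpw (e i) s\<bar> \<le> (\<Sum>m<N. \<Sum>i\<in>A m. \<bar>c i\<bar> * (s powr (ez - 1) * bt (exp 1 * max 1 t) (e i)))"
    proof -
      have "\<bar>\<Sum>m<N. \<Sum>i\<in>A m. c i * dpw (e i) s\<bar> \<le> (\<Sum>m<N. \<Sum>i\<in>A m. \<bar>c i * dpw (e i) s\<bar>)"
        by (rule order.trans[OF sum_abs sum_mono[OF sum_abs]])
      also have "\<dots> \<le> (\<Sum>m<N. \<Sum>i\<in>A m. \<bar>c i\<bar> * (s powr (ez - 1) * bt (exp 1 * max 1 t) (e i)))"
      proof (intro sum_mono)
        fix m i assume i: "i \<in> A m"
        have "\<bar>dpw (e i) s\<bar> \<le> s powr (ez - 1) * bt (exp 1 * max 1 t) (e i)"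
          by (rule dpw_dom[OF s0 ez ezle[OF i] e_nn[OF i]])
        from mult_left_mono[OF this abs_ge_zero[of "c i"]]
        show "\<bar>c i * dpw (e i) s\<bar> \<le> \<bar>c i\<bar> * (s powr (ez - 1) * bt (exp 1 * max 1 t) (e i))"
          by (simp add: abs_mult)
      qed
      finally show ?thesis .
    qed
    also have "\<dots> = s powr (ez - 1) * (\<Sum>m<N. \<Sum>i\<in>A m. \<bar>c i\<bar> * bt (exp 1 * max 1 t) (e i))"
      by (simp add: sum_distrib_left mult_ac)
    also have "\<dots> \<le> s powr (ez - 1) * K"
      unfolding K_def
      by (intro mult_left_mono sum_le_suminf[OF sK] BB_nonneg) auto
    finally have X: "\<bar>\<Sum>m<N. \<Sum>i\<in>A m. c i * dpw (e i) s\<bar> \<le> s powr (ez - 1) * K" .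
    have "norm (f N s) = (t - s) powr (- nu) * \<bar>\<Sum>m<N. \<Sum>i\<in>A m. c i * dpw (e i) s\<bar>"
      by (simp add: f_def abs_mult)
    also have "\<dots> \<le> (t - s) powr (- nu) * (s powr (ez - 1) * K)"
      by (rule mult_left_mono[OF X]) simp
    finally show ?thesis by (simp add: h_def mult_ac)
  qed
  have conv: "(\<lambda>N. f N s) \<longlonglongrightarrow> g s" if s: "s \<in> S" for s
  proof -
    from s have s0: "s > 0" by (auto simp: S_def)
    have "(\<lambda>N. \<Sum>m<N. \<Sum>i\<in>A m. c i * dpw (e i) s) \<longlonglongrightarrow> (\<Sum>m. \<Sum>i\<in>A m. c i * dpw (e i) s)"
      by (rule summable_LIMSEQ[OF FF_deriv(1)[OF s0]])
    moreover have "deriv F s = (\<Sum>m. \<Sum>i\<in>A m. c i * dpw (e i) s)"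
      by (rule DERIV_imp_deriv[OF dF[OF s0]])
    ultimately show ?thesis unfolding f_def g_def by (intro tendsto_mult_left) simp
  qed
  have G: "Gamma (1 - nu) \<noteq> 0" using Gamma_real_pos[of "1 - nu"] nu1 by linarith
  have fi: "f N integrable_on S" for N using fint[of N] by (rule has_integral_integrable)
  have gi: "g integrable_on S" and lim: "(\<lambda>N. integral S (f N)) \<longlonglongrightarrow> integral S g"
    using dominated_convergence[OF fi hint bnd conv] by auto
  have "(\<lambda>N. Gamma (1 - nu) * P N) \<longlonglongrightarrow> integral S g"
  proof -
    have "integral S (f N) = Gamma (1 - nu) * P N" for N by (rule integral_unique[OF fint])
    with lim show ?thesis by simp
  qed
  hence "(\<lambda>N. (Gamma (1 - nu) * P N) / Gamma (1 - nu)) \<longlonglongrightarrow> integral S g / Gamma (1 - nu)"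
    by (rule tendsto_divide[OF _ tendsto_const G])
  hence "P \<longlonglongrightarrow> integral S g / Gamma (1 - nu)" using G by simp
  hence sums: "(\<lambda>m. \<Sum>i\<in>A m. c i * dv nu (e i) t) sums (integral S g / Gamma (1 - nu))"
    unfolding sums_def P_def .
  have "(g has_integral Gamma (1 - nu) * (integral S g / Gamma (1 - nu))) S"
    using integrable_integral[OF gi] G by simp
  hence "(g has_integral Gamma (1 - nu) * (integral S g / Gamma (1 - nu))) {0..t}"
    by (simp add: S_def has_integral_Icc_iff_Ioo)
  hence "has_caputo_derivative nu F (integral S g / Gamma (1 - nu)) t"
    unfolding has_caputo_derivative_def using False diff by (simp add: g_def)
  with sums show ?thesis unfolding F_def by blast
qed

end


definition inc :: "nat \<Rightarrow> (nat \<Rightarrow> nat) \<Rightarrow> (nat \<Rightarrow> nat)" where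
  "inc n \<kappa> = \<kappa>(n := Suc (\<kappa> n))"

lemma sum_last: "(n::nat) \<ge> 1 \<Longrightarrow> (\<Sum>j=1..n. f j) = (\<Sum>j=1..n-1. f j) + (f n :: 'b::comm_monoid_add)"
  by (cases n) (auto simp: sum.cl_ivl_Suc add.commute)

lemma prod_last: "(n::nat) \<ge> 1 \<Longrightarrow> (\<Prod>j=1..n. f j) = (\<Prod>j=1..n-1. f j) * (f n :: 'b::comm_monoid_mult)"
  by (cases n) (auto simp: prod.cl_ivl_Suc mult.commute)

lemma sum_upd_last: "(n::nat) \<ge> 1 \<Longrightarrow> (\<Sum>j=1..n. f ((\<kappa>(n := v)) j) j) = (\<Sum>j=1..n-1. f (\<kappa> j) j) + (f v n :: 'b::comm_monoid_add)"
proof -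
  assume n: "n \<ge> 1"
  have "(\<Sum>j=1..n-1. f ((\<kappa>(n := v)) j) j) = (\<Sum>j=1..n-1. f (\<kappa> j) j)"
    by (rule sum.cong) auto
  thus ?thesis using sum_last[OF n, of "\<lambda>j. f ((\<kappa>(n := v)) j) j"] by simp
qed

lemma prod_upd_last: "(n::nat) \<ge> 1 \<Longrightarrow> (\<Prod>j=1..n. f ((\<kappa>(n := v)) j) j) = (\<Prod>j=1..n-1. f (\<kappa> j) j) * (f v n :: 'b::comm_monoid_mult)"
proof -
  assume n: "n \<ge> 1"
  have "(\<Prod>j=1..n-1. f ((\<kappa>(n := v)) j) j) = (\<Prod>j=1..n-1. f (\<kappa> j) j)"
    by (rule prod.cong) auto
  thus ?thesis using prod_last[OF n, of "\<lambda>j. f ((\<kappa>(n := v)) j) j"] by simp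
qed

lemma Lambda_memD:
  assumes "\<kappa> \<in> Lambda_set n k"
  shows "\<And>j. j \<notin> {1..n} \<Longrightarrow> \<kappa> j = 0" "\<And>j. j \<in> {2..n} \<Longrightarrow> 1 \<le> \<kappa> j" "(\<Sum>j=1..n. \<kappa> j) = k"
  using assms by (auto simp: Lambda_set_def)

lemma Lambda_card: "finite (Lambda_set n k) \<and> card (Lambda_set n k) \<le> (k + 1) ^ n"
proof -
  have inj: "inj_on (\<lambda>\<kappa>. restrict \<kappa> {1..n}) (Lambda_set n k)"
  proof (rule inj_onI)
    fix x y assume x: "x \<in> Lambda_set n k" and y: "y \<in> Lambda_set n k"
      and eq: "restrict x {1..n} = restrict y {1..n}"
    show "x = y"
    proof
      fix j show "x j = y j"
      proof (cases "j \<in> {1..n}")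
        case True then show ?thesis using fun_cong[OF eq, of j] by simp
      next
        case False then show ?thesis using Lambda_memD(1)[OF x] Lambda_memD(1)[OF y] by simp
      qed
    qed
  qed
  have sub: "(\<lambda>\<kappa>. restrict \<kappa> {1..n}) ` Lambda_set n k \<subseteq> PiE {1..n} (\<lambda>_. {0..k})"
  proof
    fix z assume "z \<in> (\<lambda>\<kappa>. restrict \<kappa> {1..n}) ` Lambda_set n k"
    then obtain \<kappa> where k: "\<kappa> \<in> Lambda_set n k" and z: "z = restrict \<kappa> {1..n}" by auto
    have "\<kappa> j \<le> k" if "j \<in> {1..n}" for j
      using member_le_sum[of j "{1..n}" \<kappa>] that Lambda_memD(3)[OF k] by simp
    thus "z \<in> PiE {1..n} (\<lambda>_. {0..k})" unfolding z by auto
  qed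
  have fin: "finite (PiE {1..n} (\<lambda>_. {0..k}))" by (intro finite_PiE) auto
  have f2: "finite ((\<lambda>\<kappa>. restrict \<kappa> {1..n}) ` Lambda_set n k)" by (rule finite_subset[OF sub fin])
  have "finite (Lambda_set n k)" using f2 inj by (simp add: finite_image_iff)
  moreover have "card (Lambda_set n k) \<le> card (PiE {1..n} (\<lambda>_. {0..k}))"
    using card_mono[OF fin sub] card_image[OF inj] by simp
  moreover have "card (PiE {1..n} (\<lambda>_. {0..k::nat})) = (k + 1) ^ n"
    by (simp add: card_PiE)
  ultimately show ?thesis by simp
qed

lemma Lambda_finite: "finite (Lambda_set n k)"
  using Lambda_card by blast

lemma Lambda_ge: assumes "\<kappa> \<in> Lambda_set n k" "n \<ge> 1" shows "k \<ge> n - 1"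
proof -
  have "(\<Sum>j=2..n. (1::nat)) \<le> (\<Sum>j=2..n. \<kappa> j)"
    by (rule sum_mono) (use Lambda_memD(2)[OF assms(1)] in auto)
  also have "\<dots> \<le> (\<Sum>j=1..n. \<kappa> j)" by (rule sum_mono2) auto
  finally show ?thesis using Lambda_memD(3)[OF assms(1)] by simp
qed

lemma Lambda_decomp:
  assumes n: "n \<ge> 2" and k: "k \<ge> 1"
  shows "(\<Sum>\<kappa>\<in>Lambda_set n k. \<phi> \<kappa>) =
     (\<Sum>\<kappa>\<in>Lambda_set n (k - 1). \<phi> (inc n \<kappa>)) + (\<Sum>\<kappa>\<in>Lambda_set (n - 1) (k - 1). \<phi> (inc n \<kappa>))"
proof -
  define B1 where "B1 = {\<kappa>\<in>Lambda_set n k. \<kappa> n \<ge> 2}"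
  define B2 where "B2 = {\<kappa>\<in>Lambda_set n k. \<kappa> n = 1}"
  have n1: "n \<ge> 1" using n by simp
  have U: "Lambda_set n k = B1 \<union> B2"
  proof -
    have "\<kappa> \<in> B1 \<union> B2" if "\<kappa> \<in> Lambda_set n k" for \<kappa>
    proof -
      have "\<kappa> n \<ge> 1" using Lambda_memD(2)[OF that, of n] n by auto
      thus ?thesis using that by (auto simp: B1_def B2_def)
    qed
    thus ?thesis by (auto simp: B1_def B2_def)
  qed
  have fB1: "finite B1" and fB2: "finite B2" by (auto simp: B1_def B2_def intro: finite_subset[OF _ Lambda_finite])
  have D: "B1 \<inter> B2 = {}" by (auto simp: B1_def B2_def)
  have S1: "(\<Sum>\<kappa>\<in>B1. \<phi> \<kappa>) = (\<Sum>\<kappa>\<in>Lambda_set n (k - 1). \<phi> (inc n \<kappa>))"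
  proof (rule sum.reindex_bij_witness[where i = "inc n" and j = "\<lambda>\<kappa>. \<kappa>(n := \<kappa> n - 1)"])
    fix \<kappa> assume a: "\<kappa> \<in> Lambda_set n (k - 1)"
    show "(inc n \<kappa>)(n := inc n \<kappa> n - 1) = \<kappa>" by (auto simp: inc_def)
    have "\<kappa> n \<ge> 1" using Lambda_memD(2)[OF a, of n] n by auto
    moreover have "(\<Sum>j=1..n. (inc n \<kappa>) j) = k"
      unfolding inc_def using sum_upd_last[OF n1, of "\<lambda>x j. x" \<kappa>] sum_last[OF n1, of \<kappa>] Lambda_memD(3)[OF a] k by simp
    ultimately show "inc n \<kappa> \<in> B1" using Lambda_memD(1,2)[OF a] n
      by (auto simp: B1_def Lambda_set_def inc_def)
  next
    fix \<kappa> assume b: "\<kappa> \<in> B1"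
    hence a: "\<kappa> \<in> Lambda_set n k" and kn: "\<kappa> n \<ge> 2" by (auto simp: B1_def)
    show *: "inc n (\<kappa>(n := \<kappa> n - 1)) = \<kappa>" using kn by (auto simp: inc_def)
    show "\<phi> (inc n (\<kappa>(n := \<kappa> n - 1))) = \<phi> \<kappa>" by (simp only: *)
    have "(\<Sum>j=1..n. (\<kappa>(n := \<kappa> n - 1)) j) = k - 1"
      using sum_upd_last[OF n1, of "\<lambda>x j. x" \<kappa>] sum_last[OF n1, of \<kappa>] Lambda_memD(3)[OF a] kn by simp
    thus "\<kappa>(n := \<kappa> n - 1) \<in> Lambda_set n (k - 1)" using Lambda_memD(1,2)[OF a] kn
      by (auto simp: Lambda_set_def)
  qed
  have S2: "(\<Sum>\<kappa>\<in>B2. \<phi> \<kappa>) = (\<Sum>\<kappa>\<in>Lambda_set (n - 1) (k - 1). \<phi> (inc n \<kappa>))"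
  proof (rule sum.reindex_bij_witness[where i = "inc n" and j = "\<lambda>\<kappa>. \<kappa>(n := \<kappa> n - 1)"])
    fix \<kappa> assume a: "\<kappa> \<in> Lambda_set (n - 1) (k - 1)"
    show "(inc n \<kappa>)(n := inc n \<kappa> n - 1) = \<kappa>" by (auto simp: inc_def)
    have kn: "\<kappa> n = 0" using Lambda_memD(1)[OF a, of n] n by auto
    have "(\<Sum>j=1..n. (inc n \<kappa>) j) = k"
      unfolding inc_def using sum_upd_last[OF n1, of "\<lambda>x j. x" \<kappa>] Lambda_memD(3)[OF a] k kn by simp
    then show "inc n \<kappa> \<in> B2" using Lambda_memD(1,2)[OF a] kn n
      by (auto simp: B2_def Lambda_set_def inc_def)
  next
    fix \<kappa> assume b: "\<kappa> \<in> B2"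
    hence a: "\<kappa> \<in> Lambda_set n k" and kn: "\<kappa> n = 1" by (auto simp: B2_def)
    show *: "inc n (\<kappa>(n := \<kappa> n - 1)) = \<kappa>" using kn by (auto simp: inc_def)
    show "\<phi> (inc n (\<kappa>(n := \<kappa> n - 1))) = \<phi> \<kappa>" by (simp only: *)
    have "(\<Sum>j=1..n-1. (\<kappa>(n := \<kappa> n - 1)) j) = (\<Sum>j=1..n-1. \<kappa> j)"
      by (rule sum.cong) auto
    hence "(\<Sum>j=1..n-1. (\<kappa>(n := \<kappa> n - 1)) j) = k - 1"
      using sum_last[OF n1, of \<kappa>] Lambda_memD(3)[OF a] kn by simp
    thus "\<kappa>(n := \<kappa> n - 1) \<in> Lambda_set (n - 1) (k - 1)" using Lambda_memD(1,2)[OF a] kn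
      by (auto simp: Lambda_set_def)
  qed
  show ?thesis using U D fB1 fB2 S1 S2 by (simp add: sum.union_disjoint)
qed

lemma Lambda_decomp1:
  assumes k: "k \<ge> 1"
  shows "(\<Sum>\<kappa>\<in>Lambda_set 1 k. \<phi> \<kappa>) = (\<Sum>\<kappa>\<in>Lambda_set 1 (k - 1). \<phi> (inc 1 \<kappa>))"
proof (rule sum.reindex_bij_witness[where i = "inc 1" and j = "\<lambda>\<kappa>. \<kappa>(1 := \<kappa> 1 - 1)"])
  fix \<kappa> assume a: "\<kappa> \<in> Lambda_set 1 (k - 1)"
  show "(inc 1 \<kappa>)(1 := inc 1 \<kappa> 1 - 1) = \<kappa>" by (auto simp: inc_def)
  show "inc 1 \<kappa> \<in> Lambda_set 1 k" using a k by (auto simp: Lambda_set_def inc_def)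
next
  fix \<kappa> assume a: "\<kappa> \<in> Lambda_set 1 k"
  show *: "inc 1 (\<kappa>(1 := \<kappa> 1 - 1)) = \<kappa>" using a k by (auto simp: inc_def Lambda_set_def)
  show "\<kappa>(1 := \<kappa> 1 - 1) \<in> Lambda_set 1 (k - 1)" using a k by (auto simp: Lambda_set_def)
  show "\<phi> (inc 1 (\<kappa>(1 := \<kappa> 1 - 1))) = \<phi> \<kappa>" by (simp only: *)
qed


lemma Gamma_lower:
  fixes x R :: real
  assumes x: "x \<ge> 0" and R: "R > 0"
  shows "R powr x * exp (-(R + 1)) \<le> Gamma (1 + x)"
proof -
  define f where "f = (\<lambda>s::real. s powr x / exp s)"
  have G: "(f has_integral Gamma (1 + x)) {0..}"
    using Gamma_integral_real[of "1 + x"] x by (simp add: f_def)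
  have cont: "continuous_on {R..R+1} f"
  proof -
    have "continuous_on {R..R+1} (\<lambda>s::real. s powr x)"
      by (rule continuous_on_powr'[OF continuous_on_id continuous_on_const]) (use R in auto)
    thus ?thesis unfolding f_def by (intro continuous_on_divide continuous_on_exp continuous_on_id) auto
  qed
  have I: "(f has_integral integral {R..R+1} f) {R..R+1}"
    by (rule integrable_integral[OF integrable_continuous_real[OF cont]])
  have le1: "integral {R..R+1} f \<le> Gamma (1 + x)"
    by (rule has_integral_subset_le[OF _ I G]) (use R in \<open>auto simp: f_def\<close>)
  have C: "((\<lambda>s. R powr x * exp (-(R + 1))) has_integral R powr x * exp (-(R + 1))) {R..R+1}"
    using has_integral_const_real[of "R powr x * exp (-(R + 1))" R "R + 1"] by simp
  have le2: "R powr x * exp (-(R + 1)) \<le> integral {R..R+1} f"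
  proof (rule has_integral_le[OF C I])
    fix s assume s: "s \<in> {R..R+1}"
    have "R powr x \<le> s powr x" using s R x by (intro powr_mono2) auto
    moreover have "exp (-(R + 1)) \<le> inverse (exp s)" using s by (simp add: exp_minus[symmetric])
    ultimately have "R powr x * exp (-(R + 1)) \<le> s powr x * inverse (exp s)"
      by (intro mult_mono) auto
    thus "R powr x * exp (-(R + 1)) \<le> f s" by (simp add: f_def divide_inverse)
  qed
  show ?thesis using le1 le2 by linarith
qed

lemma bt_upper:
  fixes T R e a b :: real
  assumes T: "T > 0" and R: "R \<ge> 1" and e: "0 \<le> a" "a \<le> e" "e \<le> b"
  shows "bt T e \<le> exp (R + 1) * (max 1 T powr b * R powr (- a))"
proof -
  have e0: "e \<ge> 0" using e by simp
  have g: "Gamma (1 + e) > 0" using e0 by (rule Gamma_1pe_pos)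
  have GL: "R powr e * exp (-(R + 1)) \<le> Gamma (1 + e)" by (rule Gamma_lower[OF e0]) (use R in auto)
  have Rp: "R powr e > 0" using R by simp
  have "1 / Gamma (1 + e) \<le> 1 / (R powr e * exp (-(R + 1)))"
    by (rule divide_left_mono[OF GL]) (use Rp g in \<open>auto intro!: mult_pos_pos\<close>)
  also have "\<dots> = exp (R + 1) * R powr (- e)"
    using R by (simp add: powr_minus exp_minus field_simps flip: exp_add)
  finally have A: "1 / Gamma (1 + e) \<le> exp (R + 1) * R powr (- e)" .
  have B: "T powr e \<le> max 1 T powr b"
  proof -
    have "T powr e \<le> max 1 T powr e" using T e0 by (intro powr_mono2) auto
    also have "\<dots> \<le> max 1 T powr b" using e by (intro powr_mono) auto
    finally show ?thesis .
  qed
  have C: "R powr (- e) \<le> R powr (- a)" using R e by (intro powr_mono) auto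
  have "bt T e = T powr e * (1 / Gamma (1 + e))" by (simp add: bt_def)
  also have "\<dots> \<le> max 1 T powr b * (exp (R + 1) * R powr (- a))"
    by (intro mult_mono B order.trans[OF A] mult_left_mono C) (use g in auto)
  finally show ?thesis by (simp add: mult_ac)
qed

definition cf :: "(nat \<Rightarrow> real) \<Rightarrow> nat \<Rightarrow> real \<Rightarrow> (nat \<Rightarrow> nat) \<Rightarrow> real" where
  "cf lam n C \<kappa> = C * ((-1) ^ (\<Sum>j=1..n. \<kappa> j) * (\<Prod>j=1..n. lam j ^ \<kappa> j))"

definition ef :: "(nat \<Rightarrow> real) \<Rightarrow> nat \<Rightarrow> (nat \<Rightarrow> nat) \<Rightarrow> real" where
  "ef nu n \<kappa> = (\<Sum>j=1..n. real (\<kappa> j) * nu j)"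

lemma ef_nonneg: "(\<forall>j\<in>{1..n}. 0 \<le> nu j) \<Longrightarrow> 0 \<le> ef nu n \<kappa>"
  unfolding ef_def by (intro sum_nonneg) auto

lemma ef_bounds:
  assumes k: "\<kappa> \<in> Lambda_set n k" and nu: "\<forall>j\<in>{1..n}. a \<le> nu j \<and> nu j \<le> 1"
  shows "a * real k \<le> ef nu n \<kappa>" "ef nu n \<kappa> \<le> real k"
proof -
  have kk: "real k = (\<Sum>j=1..n. real (\<kappa> j))" using Lambda_memD(3)[OF k] by (simp flip: of_nat_sum)
  have "a * real (\<kappa> j) \<le> real (\<kappa> j) * nu j" if "j \<in> {1..n}" for j
    using mult_right_mono[of a "nu j" "real (\<kappa> j)"] nu that by (simp add: mult.commute)
  thus "a * real k \<le> ef nu n \<kappa>" unfolding kk ef_def sum_distrib_left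
    by (intro sum_mono) auto
  show "ef nu n \<kappa> \<le> real k" unfolding kk ef_def
    by (intro sum_mono) (use nu in \<open>auto intro: mult_left_le\<close>)
qed

lemma lamp_bound:
  fixes lam :: "nat \<Rightarrow> real"
  assumes k: "\<kappa> \<in> Lambda_set n k" and lam: "\<forall>j\<in>{1..n}. 0 < lam j \<and> lam j \<le> L"
  shows "(\<Prod>j=1..n. lam j ^ \<kappa> j) \<le> L ^ k"
proof -
  have "(\<Prod>j=1..n. lam j ^ \<kappa> j) \<le> (\<Prod>j=1..n. L ^ \<kappa> j)"
  proof (rule prod_mono)
    fix j assume "j \<in> {1..n}"
    with lam have "0 < lam j" "lam j \<le> L" by auto
    thus "0 \<le> lam j ^ \<kappa> j \<and> lam j ^ \<kappa> j \<le> L ^ \<kappa> j" by (auto intro: power_mono)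
  qed
  also have "\<dots> = L ^ (\<Sum>j=1..n. \<kappa> j)" by (rule power_sum[symmetric])
  also have "\<dots> = L ^ k" using Lambda_memD(3)[OF k] by simp
  finally show ?thesis .
qed

lemma summ_app:
  fixes lam nu :: "nat \<Rightarrow> real"
  assumes lam: "\<forall>j\<in>{1..n}. 0 < lam j" and nu: "\<forall>j\<in>{1..n}. 0 < nu j \<and> nu j \<le> 1"
    and n: "n \<ge> 1" and T: "T > 0"
  shows "summable (\<lambda>m. \<Sum>\<kappa>\<in>Lambda_set n (m + (n - 1)). \<bar>cf lam n C \<kappa>\<bar> * bt T (ef nu n \<kappa>))"
proof -
  define L where "L = max 1 (Max (lam ` {1..n}))"
  define a where "a = Min (nu ` {1..n})"
  define T1 where "T1 = max 1 T"
  define Q where "Q = 2 ^ (n + 1) * T1 * L"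
  define R where "R = Q powr (1 / a)"
  define K where "K = \<bar>C\<bar> * exp (R + 1)"
  have L1: "L \<ge> 1" by (simp add: L_def)
  have lamL: "\<forall>j\<in>{1..n}. 0 < lam j \<and> lam j \<le> L"
  proof
    fix j assume j: "j \<in> {1..n}"
    have "lam j \<le> Max (lam ` {1..n})" by (rule Max_ge) (use j in auto)
    hence "lam j \<le> L" unfolding L_def by (rule order.trans[OF _ max.cobounded2])
    thus "0 < lam j \<and> lam j \<le> L" using lam j by blast
  qed
  have ne: "nu ` {1..n} \<noteq> {}" using n by auto
  have a0: "a > 0" using Min_in[OF _ ne] nu by (auto simp: a_def)
  have nua: "\<forall>j\<in>{1..n}. a \<le> nu j \<and> nu j \<le> 1" using nu by (auto simp: a_def)
  have T1: "T1 \<ge> 1" by (simp add: T1_def)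
  have Q1: "Q \<ge> 1"
  proof -
    have "(1::real) \<le> 2 ^ (n + 1)" by (rule one_le_power) simp
    moreover have "1 \<le> T1 * L" using mult_mono[of 1 T1 1 L] T1 L1 by simp
    ultimately show ?thesis unfolding Q_def using mult_mono[of 1 "2 ^ (n + 1)" 1 "T1 * L"]
      by (simp add: mult.assoc)
  qed
  have R1: "R \<ge> 1" unfolding R_def by (rule ge_one_powr_ge_zero[OF Q1]) (use a0 in simp)
  have K0: "K \<ge> 0" by (simp add: K_def)
  have termb: "\<bar>cf lam n C \<kappa>\<bar> * bt T (ef nu n \<kappa>) \<le> K * (1 / 2 ^ (n + 1)) ^ k"
    if k: "\<kappa> \<in> Lambda_set n k" for \<kappa> k
  proof -
    have P0: "0 \<le> (\<Prod>j=1..n. lam j ^ \<kappa> j)"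
    proof (rule prod_nonneg)
      fix j assume "j \<in> {1..n}"
      hence "0 < lam j" using lam by blast
      thus "0 \<le> lam j ^ \<kappa> j" by simp
    qed
    have c: "\<bar>cf lam n C \<kappa>\<bar> \<le> \<bar>C\<bar> * L ^ k"
      using lamp_bound[OF k lamL] P0 by (simp add: cf_def abs_mult power_abs mult_left_mono)
    have eb: "a * real k \<le> ef nu n \<kappa>" "ef nu n \<kappa> \<le> real k" using ef_bounds[OF k nua] by auto
    have "bt T (ef nu n \<kappa>) \<le> exp (R + 1) * (max 1 T powr real k * R powr (- (a * real k)))"
      by (rule bt_upper[OF T R1]) (use eb a0 in auto)
    also have "max 1 T powr real k = T1 ^ k" using T1 by (simp add: T1_def powr_realpow)
    also have "R powr (- (a * real k)) = inverse (Q ^ k)"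
      using a0 Q1 by (simp add: R_def powr_powr powr_minus powr_realpow)
    finally have b: "bt T (ef nu n \<kappa>) \<le> exp (R + 1) * (T1 ^ k * inverse (Q ^ k))" .
    have bt0: "0 \<le> bt T (ef nu n \<kappa>)" by (rule bt_nonneg) (use eb a0 in \<open>auto intro: order.trans[rotated]\<close>)
    have "\<bar>cf lam n C \<kappa>\<bar> * bt T (ef nu n \<kappa>) \<le> (\<bar>C\<bar> * L ^ k) * (exp (R + 1) * (T1 ^ k * inverse (Q ^ k)))"
      by (rule mult_mono[OF c b]) (use L1 bt0 in auto)
    also have "\<dots> = K * (L * T1 / Q) ^ k"
      by (simp add: K_def power_mult_distrib power_divide divide_inverse mult_ac power_inverse)
    also have "L * T1 / Q = 1 / 2 ^ (n + 1)"
      using L1 T1 by (simp add: Q_def)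
    finally show ?thesis .
  qed
  have bound: "(\<Sum>\<kappa>\<in>Lambda_set n k. \<bar>cf lam n C \<kappa>\<bar> * bt T (ef nu n \<kappa>)) \<le> K * (1 / 2) ^ k" for k
  proof -
    have "(\<Sum>\<kappa>\<in>Lambda_set n k. \<bar>cf lam n C \<kappa>\<bar> * bt T (ef nu n \<kappa>))
        \<le> real (card (Lambda_set n k)) * (K * (1 / 2 ^ (n + 1)) ^ k)"
      by (rule sum_bounded_above) (rule termb)
    also have "\<dots> \<le> (2 ^ n) ^ k * (K * (1 / 2 ^ (n + 1)) ^ k)"
    proof (rule mult_right_mono)
      have "card (Lambda_set n k) \<le> (k + 1) ^ n" using Lambda_card by blast
      also have "\<dots> \<le> (2 ^ k) ^ n" by (rule power_mono) (simp_all add: Suc_leI less_exp)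
      also have "\<dots> = (2 ^ n) ^ k" by (simp flip: power_mult add: mult.commute)
      finally show "real (card (Lambda_set n k)) \<le> (2 ^ n) ^ k"
        by (metis of_nat_le_iff of_nat_numeral of_nat_power)
    qed (use K0 in simp)
    also have "\<dots> = K * (1 / 2) ^ k"
      by (simp add: power_divide power_mult_distrib flip: power_mult)
    finally show ?thesis .
  qed
  have sg: "summable (\<lambda>m. K * (1 / 2) ^ (m + (n - 1)))"
    by (simp add: power_add summable_mult2 summable_mult)
  show ?thesis
  proof (rule summable_comparison_test[OF _ sg])
    show "\<exists>N. \<forall>m\<ge>N. norm (\<Sum>\<kappa>\<in>Lambda_set n (m + (n - 1)). \<bar>cf lam n C \<kappa>\<bar> * bt T (ef nu n \<kappa>)) \<le> K * (1 / 2) ^ (m + (n - 1))"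
    proof (intro exI allI impI)
      fix m :: nat
      have nn: "0 \<le> (\<Sum>\<kappa>\<in>Lambda_set n (m + (n - 1)). \<bar>cf lam n C \<kappa>\<bar> * bt T (ef nu n \<kappa>))"
        by (intro sum_nonneg mult_nonneg_nonneg abs_ge_zero bt_nonneg ef_nonneg) (use nu in auto)
      show "norm (\<Sum>\<kappa>\<in>Lambda_set n (m + (n - 1)). \<bar>cf lam n C \<kappa>\<bar> * bt T (ef nu n \<kappa>)) \<le> K * (1 / 2) ^ (m + (n - 1))"
        using bound[of "m + (n - 1)"] nn by simp
    qed
  qed
qed


lemma caputo_cong:
  assumes t: "t > 0" and eq: "\<And>s. s > 0 \<Longrightarrow> f s = g s"
    and H: "has_caputo_derivative nu f D t"
  shows "has_caputo_derivative nu g D t"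
proof (cases "nu = 1")
  case True
  then have "(f has_real_derivative D) (at t)" using H by (simp add: has_caputo_derivative_def)
  then have "(g has_real_derivative D) (at t)"
    by (rule has_field_derivative_transform_within_open[of _ _ _ "{0<..}"]) (use t eq in auto)
  then show ?thesis using True by (simp add: has_caputo_derivative_def)
next
  case False
  then have d: "\<forall>s\<in>{0<..<t}. f differentiable (at s)"
    and I: "((\<lambda>s. (t - s) powr (- nu) * deriv f s) has_integral (Gamma (1 - nu) * D)) {0..t}"
    using H by (auto simp: has_caputo_derivative_def)
  have d2: "\<forall>s\<in>{0<..<t}. g differentiable (at s)"
  proof
    fix s assume s: "s \<in> {0<..<t}"
    from d s obtain f' where "(f has_derivative f') (at s)" unfolding differentiable_def by blast
    then have "(g has_derivative f') (at s)"
      by (rule has_derivative_transform_within_open[of _ _ _ _ "{0<..}"]) (use s eq in auto)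
    thus "g differentiable (at s)" unfolding differentiable_def by blast
  qed
  have de: "deriv f s = deriv g s" if "s \<in> {0<..<t}" for s
  proof (rule deriv_cong_ev)
    have "\<forall>\<^sub>F y in nhds s. y \<in> {0<..}" by (rule eventually_nhds_in_open) (use that in auto)
    thus "\<forall>\<^sub>F x in nhds s. f x = g x" by (rule eventually_mono) (use eq in auto)
  qed simp
  have "((\<lambda>s. (t - s) powr (- nu) * deriv f s) has_integral (Gamma (1 - nu) * D)) {0<..<t}"
    using I by (simp add: has_integral_Icc_iff_Ioo)
  hence "((\<lambda>s. (t - s) powr (- nu) * deriv g s) has_integral (Gamma (1 - nu) * D)) {0<..<t}"
    by (subst has_integral_cong[symmetric]) (auto simp: de)
  hence "((\<lambda>s. (t - s) powr (- nu) * deriv g s) has_integral (Gamma (1 - nu) * D)) {0..t}"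
    by (simp add: has_integral_Icc_iff_Ioo)
  with d2 False show ?thesis by (simp add: has_caputo_derivative_def)
qed

lemma ef_inc: "n \<ge> 1 \<Longrightarrow> ef nu n (inc n \<kappa>) = ef nu n \<kappa> + nu n"
  unfolding ef_def inc_def
  using sum_upd_last[of n "\<lambda>x j. real x * nu j" \<kappa> "Suc (\<kappa> n)"] sum_last[of n "\<lambda>j. real (\<kappa> j) * nu j"]
  by (simp add: algebra_simps)

lemma cf_inc: "n \<ge> 1 \<Longrightarrow> cf lam n C (inc n \<kappa>) = - lam n * cf lam n C \<kappa>"
proof -
  assume n: "n \<ge> 1"
  have s: "(\<Sum>j=1..n. (inc n \<kappa>) j) = Suc (\<Sum>j=1..n. \<kappa> j)"
    unfolding inc_def using sum_upd_last[OF n, of "\<lambda>x j. x" \<kappa> "Suc (\<kappa> n)"] sum_last[OF n, of \<kappa>] by simp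
  have p: "(\<Prod>j=1..n. lam j ^ (inc n \<kappa>) j) = (\<Prod>j=1..n. lam j ^ \<kappa> j) * lam n"
    unfolding inc_def using prod_upd_last[OF n, of "\<lambda>x j. lam j ^ x" \<kappa> "Suc (\<kappa> n)"] prod_last[OF n, of "\<lambda>j. lam j ^ \<kappa> j"]
    by (simp add: mult_ac)
  show ?thesis unfolding cf_def s p by (simp add: mult_ac)
qed

lemma dv_shift: "t > 0 \<Longrightarrow> e \<ge> 0 \<Longrightarrow> v > 0 \<Longrightarrow> dv v (e + v) t = pw e t"
  by (auto simp: dv_def pw_def tpow_def add.assoc)

lemma ef_drop: "n \<ge> 2 \<Longrightarrow> \<kappa> n = 0 \<Longrightarrow> ef nu n \<kappa> = ef nu (n - 1) \<kappa>"
  unfolding ef_def using sum_last[of n "\<lambda>j. real (\<kappa> j) * nu j"] by simp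

lemma cf_drop: "n \<ge> 2 \<Longrightarrow> \<kappa> n = 0 \<Longrightarrow> cf lam n C \<kappa> = cf lam (n - 1) C \<kappa>"
  unfolding cf_def using sum_last[of n \<kappa>] prod_last[of n "\<lambda>j. lam j ^ \<kappa> j"] by simp

lemma cf_scale: "cf lam n (a * C) \<kappa> = a * cf lam n C \<kappa>"
  by (simp add: cf_def)

definition Cn :: "(nat \<Rightarrow> real) \<Rightarrow> nat \<Rightarrow> real" where
  "Cn lam n = (-1) ^ (n - 1) * (lam 1 / lam n)"

definition GG :: "(nat \<Rightarrow> real) \<Rightarrow> (nat \<Rightarrow> real) \<Rightarrow> nat \<Rightarrow> real \<Rightarrow> nat \<Rightarrow> real \<Rightarrow> real" where
  "GG lam nu n C m t = (\<Sum>\<kappa>\<in>Lambda_set n (m + (n - 1)). cf lam n C \<kappa> * pw (ef nu n \<kappa>) t)"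

lemma ef_ge_n:
  assumes n: "n \<ge> 2" and k: "\<kappa> \<in> Lambda_set n k" and nu: "\<forall>j\<in>{1..n}. 0 < nu j"
  shows "nu n \<le> ef nu n \<kappa>"
proof -
  have kn: "\<kappa> n \<ge> 1" using Lambda_memD(2)[OF k, of n] n by auto
  have "0 < nu n" using nu n by auto
  hence "1 * nu n \<le> real (\<kappa> n) * nu n" using kn by (intro mult_right_mono) auto
  hence "nu n \<le> real (\<kappa> n) * nu n" by simp
  also have "\<dots> \<le> ef nu n \<kappa>" unfolding ef_def
  proof (rule member_le_sum)
    fix x assume "x \<in> {1..n} - {n}"
    hence "0 < nu x" using nu by auto
    thus "0 \<le> real (\<kappa> x) * nu x" by simp
  qed (use n in auto)
  finally show ?thesis .
qed

lemma ef_one: "ef nu 1 \<kappa> = real (\<kappa> 1) * nu 1"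
  by (simp add: ef_def)

context
  fixes lam nu :: "nat \<Rightarrow> real"
  assumes lam_pos: "\<forall>n\<ge>1. 0 < lam n"
    and nu_range: "\<forall>n\<ge>1. 0 < nu n \<and> nu n \<le> 1"
begin

lemma lam_on: "\<forall>j\<in>{1..n}. 0 < lam j" using lam_pos by auto
lemma nu_on: "\<forall>j\<in>{1..n}. 0 < nu j \<and> nu j \<le> 1" using nu_range by auto

lemma H_fin: "finite (Lambda_set n (m + (n - 1)))" by (rule Lambda_finite)
lemma H_enn: "\<kappa> \<in> Lambda_set n (m + (n - 1)) \<Longrightarrow> 0 \<le> ef nu n \<kappa>"
  by (rule ef_nonneg) (use nu_on in \<open>auto intro: less_imp_le\<close>)
lemma H_summ: "n \<ge> 1 \<Longrightarrow> T > 0 \<Longrightarrow>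
   summable (\<lambda>m. \<Sum>\<kappa>\<in>Lambda_set n (m + (n - 1)). \<bar>cf lam n C \<kappa>\<bar> * bt T (ef nu n \<kappa>))"
  by (rule summ_app[OF lam_on nu_on])

lemma G_summable: "n \<ge> 1 \<Longrightarrow> t \<ge> 0 \<Longrightarrow> summable (\<lambda>m. GG lam nu n C m t)"
  unfolding GG_def by (rule summable_GG[OF H_fin H_enn H_summ])

lemma G_cont: "n \<ge> 1 \<Longrightarrow> continuous_on {0..} (\<lambda>t. \<Sum>m. GG lam nu n C m t)"
  unfolding GG_def by (rule cont_FF[OF H_fin H_enn H_summ])

lemma e0le: "n \<ge> 1 \<Longrightarrow> \<kappa> \<in> Lambda_set n k \<Longrightarrow> ef nu n \<kappa> = 0 \<or> nu n \<le> ef nu n \<kappa>"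
proof -
  assume n: "n \<ge> 1" and k: "\<kappa> \<in> Lambda_set n k"
  show ?thesis
  proof (cases "n = 1")
    case True
    have "nu 1 > 0" using nu_range by auto
    moreover have "ef nu n \<kappa> = real (\<kappa> 1) * nu 1" using True ef_one[of nu \<kappa>] by simp
    ultimately show ?thesis using True by (cases "\<kappa> 1") auto
  next
    case False
    with n have "n \<ge> 2" by simp
    thus ?thesis using ef_ge_n[OF _ k] nu_on by auto
  qed
qed

lemma G_caputo:
  assumes n: "n \<ge> 1" and t: "t > 0"
  shows "\<exists>D. (\<lambda>m. \<Sum>\<kappa>\<in>Lambda_set n (m + (n - 1)). cf lam n C \<kappa> * dv (nu n) (ef nu n \<kappa>) t) sums D \<and>
     has_caputo_derivative (nu n) (\<lambda>t. \<Sum>m. GG lam nu n C m t) D t"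
  unfolding GG_def
  by (rule FF_caputo[OF H_fin H_enn H_summ, where nu="nu n" and ez="nu n" and t=t])
     (use n t nu_range e0le in auto)

lemma fpb_term_eq: "fpb_term lam nu n t m = GG lam nu n 1 m t"
  unfolding fpb_term_def fpb_inner_def GG_def sum_distrib_left
proof (rule sum.cong[OF refl])
  fix \<kappa> assume k: "\<kappa> \<in> Lambda_set n (m + (n - 1))"
  show "(-1) ^ (m + (n - 1)) * (tpow t (\<Sum>j = 1..n. real (\<kappa> j) * nu j) * (\<Prod>j = 1..n. lam j ^ \<kappa> j) /
          Gamma (1 + (\<Sum>j = 1..n. real (\<kappa> j) * nu j))) = cf lam n 1 \<kappa> * pw (ef nu n \<kappa>) t"
    using Lambda_memD(3)[OF k] by (simp add: cf_def pw_def ef_def)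
qed

lemma fpb_term_fun: "fpb_term lam nu n t = (\<lambda>m. GG lam nu n 1 m t)"
  by (rule ext) (rule fpb_term_eq)

lemma GG_scale: "GG lam nu n C m t = C * GG lam nu n 1 m t"
  unfolding GG_def sum_distrib_left using cf_scale[of lam n C 1] by (simp add: mult_ac)

lemma fpb_sol_eq:
  assumes n: "n \<ge> 1" and t: "t \<ge> 0"
  shows "fpb_sol lam nu n t = (\<Sum>m. GG lam nu n (Cn lam n) m t)"
proof -
  have "fpb_sol lam nu n t = Cn lam n * (\<Sum>m. GG lam nu n 1 m t)"
    using n by (simp add: fpb_sol_def Cn_def fpb_term_fun)
  also have "\<dots> = (\<Sum>m. Cn lam n * GG lam nu n 1 m t)"
    by (rule suminf_mult[symmetric, OF G_summable[OF n t]])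
  also have "\<dots> = (\<Sum>m. GG lam nu n (Cn lam n) m t)"
    by (simp add: GG_scale[where C="Cn lam n"])
  finally show ?thesis .
qed


lemma ef_nn: "0 \<le> ef nu n \<kappa>"
  by (rule ef_nonneg) (use nu_on in \<open>auto intro: less_imp_le\<close>)

lemma phi_inc:
  assumes n: "n \<ge> 1" and t: "t > 0"
  shows "cf lam n C (inc n \<kappa>) * dv (nu n) (ef nu n (inc n \<kappa>)) t = - lam n * (cf lam n C \<kappa> * pw (ef nu n \<kappa>) t)"
proof -
  have "nu n > 0" using nu_range n by auto
  thus ?thesis using n t by (simp add: cf_inc ef_inc dv_shift ef_nn)
qed

lemma Cn_step: "n \<ge> 2 \<Longrightarrow> - lam n * Cn lam n = lam (n - 1) * Cn lam (n - 1)"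
proof -
  assume n: "n \<ge> 2"
  then obtain j where j: "n = Suc (Suc j)" by (metis add_2_eq_Suc le_Suc_ex)
  have "lam n > 0" "lam (n - 1) > 0" using lam_pos n by auto
  thus ?thesis unfolding Cn_def j by (simp add: field_simps)
qed

lemma d_split:
  assumes n: "n \<ge> 1" and t: "t > 0"
  shows "(\<Sum>\<kappa>\<in>Lambda_set n (m + (n - 1)). cf lam n (Cn lam n) \<kappa> * dv (nu n) (ef nu n \<kappa>) t) =
    (if m = 0 then 0 else - lam n * GG lam nu n (Cn lam n) (m - 1) t) +
    (if n \<ge> 2 then lam (n - 1) * GG lam nu (n - 1) (Cn lam (n - 1)) m t else 0)"
proof (cases "n = 1")
  case True
  show ?thesis
  proof (cases m)
    case 0
    have "cf lam n (Cn lam n) \<kappa> * dv (nu n) (ef nu n \<kappa>) t = 0" if "\<kappa> \<in> Lambda_set n (m + (n - 1))" for \<kappa>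
    proof -
      have "\<kappa> 1 = 0" using Lambda_memD(3)[OF that] True 0 by simp
      hence "ef nu n \<kappa> = 0" using True ef_one[of nu \<kappa>] by simp
      thus ?thesis by (simp add: dv_def)
    qed
    hence "(\<Sum>\<kappa>\<in>Lambda_set n (m + (n - 1)). cf lam n (Cn lam n) \<kappa> * dv (nu n) (ef nu n \<kappa>) t) = 0"
      by (intro sum.neutral) blast
    thus ?thesis using True 0 by simp
  next
    case (Suc m')
    have "(\<Sum>\<kappa>\<in>Lambda_set n (m + (n - 1)). cf lam n (Cn lam n) \<kappa> * dv (nu n) (ef nu n \<kappa>) t)
       = (\<Sum>\<kappa>\<in>Lambda_set 1 m'. cf lam n (Cn lam n) (inc 1 \<kappa>) * dv (nu n) (ef nu n (inc 1 \<kappa>)) t)"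
      using Lambda_decomp1[of m "\<lambda>\<kappa>. cf lam n (Cn lam n) \<kappa> * dv (nu n) (ef nu n \<kappa>) t"] True Suc by simp
    also have "\<dots> = (\<Sum>\<kappa>\<in>Lambda_set 1 m'. - lam n * (cf lam n (Cn lam n) \<kappa> * pw (ef nu n \<kappa>) t))"
      using phi_inc[OF n t] True by simp
    also have "\<dots> = - lam n * GG lam nu n (Cn lam n) m' t"
      using True by (simp add: GG_def sum_distrib_left)
    finally show ?thesis using True Suc by simp
  qed
next
  case False
  with n have n2: "n \<ge> 2" by simp
  define \<phi> where "\<phi> = (\<lambda>\<kappa>. cf lam n (Cn lam n) \<kappa> * dv (nu n) (ef nu n \<kappa>) t)"
  have k1: "m + (n - 1) \<ge> 1" using n2 by simp
  have dec: "(\<Sum>\<kappa>\<in>Lambda_set n (m + (n - 1)). \<phi> \<kappa>) =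
     (\<Sum>\<kappa>\<in>Lambda_set n (m + (n - 1) - 1). \<phi> (inc n \<kappa>)) + (\<Sum>\<kappa>\<in>Lambda_set (n - 1) (m + (n - 1) - 1). \<phi> (inc n \<kappa>))"
    by (rule Lambda_decomp[OF n2 k1])
  have P1: "(\<Sum>\<kappa>\<in>Lambda_set n (m + (n - 1) - 1). \<phi> (inc n \<kappa>)) =
      (if m = 0 then 0 else - lam n * GG lam nu n (Cn lam n) (m - 1) t)"
  proof (cases m)
    case 0
    have "Lambda_set n (m + (n - 1) - 1) = {}"
    proof (rule ccontr)
      assume "Lambda_set n (m + (n - 1) - 1) \<noteq> {}"
      then obtain \<kappa> where "\<kappa> \<in> Lambda_set n (m + (n - 1) - 1)" by blast
      from Lambda_ge[OF this n] 0 n2 show False by simp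
    qed
    thus ?thesis using 0 by simp
  next
    case (Suc m')
    have "(\<Sum>\<kappa>\<in>Lambda_set n (m + (n - 1) - 1). \<phi> (inc n \<kappa>)) =
        (\<Sum>\<kappa>\<in>Lambda_set n (m' + (n - 1)). - lam n * (cf lam n (Cn lam n) \<kappa> * pw (ef nu n \<kappa>) t))"
      unfolding \<phi>_def using phi_inc[OF n t] Suc n2 by simp
    also have "\<dots> = - lam n * GG lam nu n (Cn lam n) m' t" by (simp add: GG_def sum_distrib_left)
    finally show ?thesis using Suc by simp
  qed
  have P2: "(\<Sum>\<kappa>\<in>Lambda_set (n - 1) (m + (n - 1) - 1). \<phi> (inc n \<kappa>)) =
      lam (n - 1) * GG lam nu (n - 1) (Cn lam (n - 1)) m t"
  proof -
    have "(\<Sum>\<kappa>\<in>Lambda_set (n - 1) (m + (n - 1) - 1). \<phi> (inc n \<kappa>)) =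
        (\<Sum>\<kappa>\<in>Lambda_set (n - 1) (m + (n - 1 - 1)). cf lam (n - 1) (lam (n - 1) * Cn lam (n - 1)) \<kappa> * pw (ef nu (n - 1) \<kappa>) t)"
    proof (rule sum.cong)
      show "Lambda_set (n - 1) (m + (n - 1) - 1) = Lambda_set (n - 1) (m + (n - 1 - 1))" using n2 by simp
    next
      fix \<kappa> assume k: "\<kappa> \<in> Lambda_set (n - 1) (m + (n - 1 - 1))"
      have kn: "\<kappa> n = 0" using Lambda_memD(1)[OF k, of n] n2 by simp
      have "\<phi> (inc n \<kappa>) = - lam n * (cf lam n (Cn lam n) \<kappa> * pw (ef nu n \<kappa>) t)"
        unfolding \<phi>_def by (rule phi_inc[OF n t])
      also have "\<dots> = cf lam (n - 1) (- lam n * Cn lam n) \<kappa> * pw (ef nu (n - 1) \<kappa>) t"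
        using cf_drop[of n \<kappa>, OF n2 kn] ef_drop[of n \<kappa>, OF n2 kn]
          cf_scale[of lam "n - 1" "- lam n" "Cn lam n" \<kappa>] by simp
      also have "\<dots> = cf lam (n - 1) (lam (n - 1) * Cn lam (n - 1)) \<kappa> * pw (ef nu (n - 1) \<kappa>) t"
        using Cn_step[OF n2] by simp
      finally show "\<phi> (inc n \<kappa>) = cf lam (n - 1) (lam (n - 1) * Cn lam (n - 1)) \<kappa> * pw (ef nu (n - 1) \<kappa>) t" .
    qed
    also have "\<dots> = lam (n - 1) * GG lam nu (n - 1) (Cn lam (n - 1)) m t"
      by (simp add: GG_def sum_distrib_left cf_scale mult.assoc)
    finally show ?thesis .
  qed
  show ?thesis using dec P1 P2 n2 unfolding \<phi>_def by simp
qed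

lemma d_identity:
  assumes n: "n \<ge> 1" and t: "t > 0"
  shows "(\<lambda>m. \<Sum>\<kappa>\<in>Lambda_set n (m + (n - 1)). cf lam n (Cn lam n) \<kappa> * dv (nu n) (ef nu n \<kappa>) t) sums
     (- lam n * fpb_sol lam nu n t + lam (n - 1) * fpb_sol lam nu (n - 1) t)"
proof -
  define X where "X = (\<lambda>m. if m = 0 then 0 else - lam n * GG lam nu n (Cn lam n) (m - 1) t)"
  define Y where "Y = (\<lambda>m. if n \<ge> 2 then lam (n - 1) * GG lam nu (n - 1) (Cn lam (n - 1)) m t else 0)"
  have t0: "t \<ge> 0" using t by simp
  have "(\<lambda>m. GG lam nu n (Cn lam n) m t) sums fpb_sol lam nu n t"
    using summable_sums[OF G_summable[OF n t0]] fpb_sol_eq[OF n t0] by simp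
  hence S: "(\<lambda>m. - lam n * GG lam nu n (Cn lam n) m t) sums (- lam n * fpb_sol lam nu n t)"
    by (rule sums_mult)
  have "(\<lambda>m. X (Suc m)) = (\<lambda>m. - lam n * GG lam nu n (Cn lam n) m t)" by (simp add: X_def)
  with S have "(\<lambda>m. X (Suc m)) sums (- lam n * fpb_sol lam nu n t)" by simp
  hence "X sums (- lam n * fpb_sol lam nu n t + X 0)" by (rule sums_Suc_iff[THEN iffD1])
  moreover have "X 0 = 0" by (simp add: X_def)
  ultimately have XS: "X sums (- lam n * fpb_sol lam nu n t)" by simp
  have YS: "Y sums (lam (n - 1) * fpb_sol lam nu (n - 1) t)"
  proof (cases "n \<ge> 2")
    case True
    hence n1: "n - 1 \<ge> 1" by simp
    have "(\<lambda>m. GG lam nu (n - 1) (Cn lam (n - 1)) m t) sums fpb_sol lam nu (n - 1) t"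
      using summable_sums[OF G_summable[OF n1 t0]] fpb_sol_eq[OF n1 t0] by simp
    hence "(\<lambda>m. lam (n - 1) * GG lam nu (n - 1) (Cn lam (n - 1)) m t) sums (lam (n - 1) * fpb_sol lam nu (n - 1) t)"
      by (rule sums_mult)
    thus ?thesis unfolding Y_def using True by simp
  next
    case False
    hence "n - 1 = 0" using n by simp
    thus ?thesis unfolding Y_def using False by (simp add: fpb_sol_def)
  qed
  have "(\<lambda>m. X m + Y m) sums (- lam n * fpb_sol lam nu n t + lam (n - 1) * fpb_sol lam nu (n - 1) t)"
    by (rule sums_add[OF XS YS])
  moreover have "(\<lambda>m. X m + Y m) = (\<lambda>m. \<Sum>\<kappa>\<in>Lambda_set n (m + (n - 1)). cf lam n (Cn lam n) \<kappa> * dv (nu n) (ef nu n \<kappa>) t)"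
  proof
    fix m
    show "X m + Y m = (\<Sum>\<kappa>\<in>Lambda_set n (m + (n - 1)). cf lam n (Cn lam n) \<kappa> * dv (nu n) (ef nu n \<kappa>) t)"
      unfolding X_def Y_def by (rule d_split[OF n t, symmetric])
  qed
  ultimately show ?thesis by simp
qed

lemma sol_caputo:
  assumes n: "n \<ge> 1" and t: "t > 0"
  shows "has_caputo_derivative (nu n) (fpb_sol lam nu n)
           (- lam n * fpb_sol lam nu n t + lam (n - 1) * fpb_sol lam nu (n - 1) t) t"
proof -
  obtain D where D: "(\<lambda>m. \<Sum>\<kappa>\<in>Lambda_set n (m + (n - 1)). cf lam n (Cn lam n) \<kappa> * dv (nu n) (ef nu n \<kappa>) t) sums D"
    and H: "has_caputo_derivative (nu n) (\<lambda>t. \<Sum>m. GG lam nu n (Cn lam n) m t) D t"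
    using G_caputo[OF n t] by blast
  have "D = - lam n * fpb_sol lam nu n t + lam (n - 1) * fpb_sol lam nu (n - 1) t"
    using sums_unique2[OF D d_identity[OF n t]] .
  with H have H': "has_caputo_derivative (nu n) (\<lambda>t. \<Sum>m. GG lam nu n (Cn lam n) m t)
     (- lam n * fpb_sol lam nu n t + lam (n - 1) * fpb_sol lam nu (n - 1) t) t" by simp
  show ?thesis
    by (rule caputo_cong[OF t _ H']) (use fpb_sol_eq[OF n] in auto)
qed

lemma sol_cont: "n \<ge> 1 \<Longrightarrow> continuous_on {0..} (fpb_sol lam nu n)"
  using G_cont[of n "Cn lam n"] by (rule continuous_on_cong[THEN iffD1, rotated 2]) (auto simp: fpb_sol_eq)

lemma term_summable: "n \<ge> 1 \<Longrightarrow> t \<ge> 0 \<Longrightarrow> summable (fpb_term lam nu n t)"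
  unfolding fpb_term_fun by (rule G_summable)


lemma sol_1_0: "fpb_sol lam nu 1 0 = 1"
proof -
  have L0: "Lambda_set 1 0 = {\<lambda>_. 0}"
  proof
    show "Lambda_set 1 0 \<subseteq> {\<lambda>_. 0}"
    proof
      fix \<kappa> assume k: "\<kappa> \<in> Lambda_set 1 0"
      have "\<kappa> j = 0" for j
      proof (cases "j = 1")
        case True thus ?thesis using Lambda_memD(3)[OF k] by simp
      next
        case False thus ?thesis using Lambda_memD(1)[OF k, of j] by simp
      qed
      thus "\<kappa> \<in> {\<lambda>_. 0}" by auto
    qed
  next
    show "{\<lambda>_. 0} \<subseteq> Lambda_set 1 0" by (auto simp: Lambda_set_def)
  qed
  have nu1: "nu 1 > 0" using nu_range by auto
  have T: "fpb_term lam nu 1 0 = (\<lambda>m. if m = 0 then 1 else 0)"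
  proof
    fix m
    show "fpb_term lam nu 1 0 m = (if m = 0 then 1 else 0)"
    proof (cases "m = 0")
      case True
      have L0': "Lambda_set (Suc 0) 0 = {\<lambda>_. 0}" using L0 by simp
      show ?thesis using True by (simp add: fpb_term_def fpb_inner_def L0' tpow_def)
    next
      case False
      have "tpow 0 (\<Sum>j = 1..1. real (\<kappa> j) * nu j) * (\<Prod>j = 1..1. lam j ^ \<kappa> j) /
              Gamma (1 + (\<Sum>j = 1..1. real (\<kappa> j) * nu j)) = 0"
        if k: "\<kappa> \<in> Lambda_set 1 m" for \<kappa>
      proof -
        have k1: "\<kappa> 1 = m" using Lambda_memD(3)[OF k] by simp
        hence "real (\<kappa> 1) * nu 1 > 0" using False nu1 by simp
        thus ?thesis using k1 False nu1 by (simp add: tpow_def)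
      qed
      hence "fpb_inner lam nu 1 m 0 = 0" unfolding fpb_inner_def by (intro sum.neutral) blast
      thus ?thesis using False by (simp add: fpb_term_def)
    qed
  qed
  have "(\<lambda>m. if m = 0 then 1 else 0) sums (1::real)"
    using sums_single[of 0 "\<lambda>_. 1::real"] by simp
  hence "(\<Sum>m. fpb_term lam nu 1 0 m) = 1" unfolding T by (rule sums_unique[symmetric])
  moreover have "lam 1 > 0" using lam_pos by auto
  ultimately show ?thesis by (simp add: fpb_sol_def)
qed

lemma sol_n_0: "n \<ge> 2 \<Longrightarrow> fpb_sol lam nu n 0 = 0"
proof -
  assume n: "n \<ge> 2"
  have "fpb_term lam nu n 0 m = 0" for m
  proof -
    have "tpow 0 (\<Sum>j = 1..n. real (\<kappa> j) * nu j) * (\<Prod>j = 1..n. lam j ^ \<kappa> j) /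
              Gamma (1 + (\<Sum>j = 1..n. real (\<kappa> j) * nu j)) = 0"
      if k: "\<kappa> \<in> Lambda_set n (m + (n - 1))" for \<kappa>
    proof -
      have "nu n \<le> ef nu n \<kappa>" by (rule ef_ge_n[OF n k]) (use nu_on in auto)
      moreover have "nu n > 0" using nu_range n by auto
      ultimately have "(\<Sum>j = 1..n. real (\<kappa> j) * nu j) > 0" by (simp add: ef_def)
      thus ?thesis by (simp add: tpow_def)
    qed
    hence "fpb_inner lam nu n (m + (n - 1)) 0 = 0" unfolding fpb_inner_def by (intro sum.neutral) blast
    thus ?thesis by (simp add: fpb_term_def)
  qed
  thus ?thesis by (simp add: fpb_sol_def)
qed

end

theorem theorem5p1:
  fixes lam nu :: "nat \<Rightarrow> real"
  assumes lam_pos: "\<forall>n\<ge>1. 0 < lam n"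
    and nu_range: "\<forall>n\<ge>1. 0 < nu n \<and> nu n \<le> 1"
  shows "(\<forall>n\<ge>1. \<forall>t\<ge>0. summable (fpb_term lam nu n t))
       \<and> (\<forall>n\<ge>1. continuous_on {0..} (fpb_sol lam nu n))
       \<and> (\<forall>t\<ge>0. fpb_sol lam nu 0 t = 0)
       \<and> fpb_sol lam nu 1 0 = 1
       \<and> (\<forall>n\<ge>2. fpb_sol lam nu n 0 = 0)
       \<and> (\<forall>n\<ge>1. \<forall>t>0. has_caputo_derivative (nu n) (fpb_sol lam nu n)
              (- lam n * fpb_sol lam nu n t + lam (n - 1) * fpb_sol lam nu (n - 1) t) t)"
  using term_summable[OF lam_pos nu_range] sol_cont[OF lam_pos nu_range]
    sol_1_0[OF lam_pos nu_range] sol_n_0[OF lam_pos nu_range] sol_caputo[OF lam_pos nu_range]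
  by (auto simp: fpb_sol_def)


end
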